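(* Let $K$ be a field of characteristic $0$, $\eta\in K\setminus\{0\}$ not a root of unity, and $A=A_\eta=A(\alpha,-\eta,1)$ with $\alpha=1+\eta$. Then $A$ has infinitely many pairwise non-isomorphic simple lowest weight modules $W(\kappa)$, $\kappa\in K$.
   Context: The down-up algebra $A(\alpha,\beta,\gamma)$ is the $K$-algebra generated by $d,u$ with relations $d^2u=\alpha dud+\beta ud^2+\gamma d$ and $du^2=\alpha udu+\beta u^2d+\gamma u$. For $\kappa\in K$ define $\kappa_{-1}=0$, $\kappa_0=\kappa$ and $\kappa_n=\eta^{-1}(\alpha\kappa_{n-1}-\kappa_{n-2}+1)$ for $n>0$. The module $W(\kappa)$ has $K$-basis $\{a_n\}_{n\ge0}$ with $u\cdot a_0=0$, $u\cdot a_n=\kappa_{n-1}a_{n-1}$ for $n\ge1$, and $d\cdot a_n=a_{n+1}$. *)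

theory Defs
  imports Main
begin

text \<open>The sequence kappa_n (with kappa_{-1} = 0, kappa_0 = kappa).\<close>
fun kseq :: "'a::field \<Rightarrow> 'a \<Rightarrow> 'a \<Rightarrow> nat \<Rightarrow> 'a" where
  "kseq \<eta> \<alpha> \<kappa> 0 = \<kappa>"
| "kseq \<eta> \<alpha> \<kappa> (Suc 0) = inverse \<eta> * (\<alpha> * \<kappa> - 0 + 1)"
| "kseq \<eta> \<alpha> \<kappa> (Suc (Suc n)) =
     inverse \<eta> * (\<alpha> * kseq \<eta> \<alpha> \<kappa> (Suc n) - kseq \<eta> \<alpha> \<kappa> n + 1)"

text \<open>Underlying vector space of W(kappa): finitely supported coefficient sequences
  w.r.t. the basis a_0, a_1, ... (f n = coefficient of a_n).\<close>
definition Wsp :: "(nat \<Rightarrow> 'a::field) set" where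
  "Wsp = {f. finite {n. f n \<noteq> 0}}"

text \<open>d . a_n = a_{n+1}\<close>
definition Wd :: "(nat \<Rightarrow> 'a::field) \<Rightarrow> nat \<Rightarrow> 'a" where
  "Wd f n = (if n = 0 then 0 else f (n - 1))"

text \<open>u . a_0 = 0, u . a_n = kappa_{n-1} a_{n-1}\<close>
definition Wu :: "'a::field \<Rightarrow> 'a \<Rightarrow> 'a \<Rightarrow> (nat \<Rightarrow> 'a) \<Rightarrow> nat \<Rightarrow> 'a" where
  "Wu \<eta> \<alpha> \<kappa> f n = kseq \<eta> \<alpha> \<kappa> n * f (Suc n)"

definition subspace_of :: "(nat \<Rightarrow> 'a::field) set \<Rightarrow> bool" where
  "subspace_of V \<longleftrightarrow> (\<lambda>n. 0) \<in> V \<and> (\<forall>x\<in>V. \<forall>y\<in>V. (\<lambda>n. x n + y n) \<in> V) \<and> (\<forall>c. \<forall>x\<in>V. (\<lambda>n. c * x n) \<in> V)"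

definition lin_on :: "(nat \<Rightarrow> 'a::field) set \<Rightarrow> ((nat \<Rightarrow> 'a) \<Rightarrow> (nat \<Rightarrow> 'a)) \<Rightarrow> bool" where
  "lin_on V T \<longleftrightarrow> (\<forall>x\<in>V. \<forall>y\<in>V. T (\<lambda>n. x n + y n) = (\<lambda>n. T x n + T y n)) \<and>
                 (\<forall>c. \<forall>x\<in>V. T (\<lambda>n. c * x n) = (\<lambda>n. c * T x n))"

definition downup_module ::
  "'a::field \<Rightarrow> 'a \<Rightarrow> 'a \<Rightarrow> (nat \<Rightarrow> 'a) set \<Rightarrow> ((nat \<Rightarrow> 'a) \<Rightarrow> (nat \<Rightarrow> 'a))
     \<Rightarrow> ((nat \<Rightarrow> 'a) \<Rightarrow> (nat \<Rightarrow> 'a)) \<Rightarrow> bool" where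
  "downup_module \<alpha> \<beta> \<gamma> V D U \<longleftrightarrow> subspace_of V \<and> lin_on V D \<and> lin_on V U \<and>
     (\<forall>x\<in>V. D x \<in> V \<and> U x \<in> V) \<and>
     (\<forall>x\<in>V. D (D (U x)) = (\<lambda>n. \<alpha> * D (U (D x)) n + \<beta> * U (D (D x)) n + \<gamma> * D x n)) \<and>
     (\<forall>x\<in>V. D (U (U x)) = (\<lambda>n. \<alpha> * U (D (U x)) n + \<beta> * U (U (D x)) n + \<gamma> * U x n))"

definition simple_module ::
  "(nat \<Rightarrow> 'a::field) set \<Rightarrow> ((nat \<Rightarrow> 'a) \<Rightarrow> (nat \<Rightarrow> 'a)) \<Rightarrow> ((nat \<Rightarrow> 'a) \<Rightarrow> (nat \<Rightarrow> 'a)) \<Rightarrow> bool" where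
  "simple_module V D U \<longleftrightarrow> V \<noteq> {\<lambda>n. 0} \<and>
     (\<forall>S. S \<subseteq> V \<and> subspace_of S \<and> (\<forall>x\<in>S. D x \<in> S \<and> U x \<in> S) \<longrightarrow> S = {\<lambda>n. 0} \<or> S = V)"

definition modules_iso ::
  "(nat \<Rightarrow> 'a::field) set \<Rightarrow> ((nat \<Rightarrow> 'a) \<Rightarrow> (nat \<Rightarrow> 'a)) \<Rightarrow> ((nat \<Rightarrow> 'a) \<Rightarrow> (nat \<Rightarrow> 'a)) \<Rightarrow>
   (nat \<Rightarrow> 'a) set \<Rightarrow> ((nat \<Rightarrow> 'a) \<Rightarrow> (nat \<Rightarrow> 'a)) \<Rightarrow> ((nat \<Rightarrow> 'a) \<Rightarrow> (nat \<Rightarrow> 'a)) \<Rightarrow> bool" where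
  "modules_iso V D U V' D' U' \<longleftrightarrow> (\<exists>\<phi>. bij_betw \<phi> V V' \<and> lin_on V \<phi> \<and>
     (\<forall>x\<in>V. \<phi> (D x) = D' (\<phi> x) \<and> \<phi> (U x) = U' (\<phi> x)))"

end

theory Submission
  imports Defs
begin


lemma kseq_step:
  assumes "\<eta> \<noteq> (0::'a::field)"
  shows "\<eta> * kseq \<eta> \<alpha> \<kappa> (Suc n) = \<alpha> * kseq \<eta> \<alpha> \<kappa> n - (if n = 0 then 0 else kseq \<eta> \<alpha> \<kappa> (n-1)) + 1"
  using assms by (cases n) (auto simp: field_simps)

lemma Wsp_Wd: "f \<in> Wsp \<Longrightarrow> Wd f \<in> Wsp"
proof -
  assume "f \<in> Wsp"
  hence "finite {n. f n \<noteq> 0}" by (simp add: Wsp_def)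
  moreover have "{n. Wd f n \<noteq> 0} \<subseteq> Suc ` {n. f n \<noteq> 0}"
  proof
    fix n assume "n \<in> {n. Wd f n \<noteq> 0}"
    then have "n \<noteq> 0" "f (n-1) \<noteq> 0" by (auto simp: Wd_def split: if_splits)
    then show "n \<in> Suc ` {n. f n \<noteq> 0}" by (intro image_eqI[of _ _ "n-1"]) auto
  qed
  ultimately show ?thesis by (simp add: Wsp_def finite_subset)
qed

lemma Wsp_Wu: "f \<in> Wsp \<Longrightarrow> Wu \<eta> \<alpha> \<kappa> f \<in> Wsp"
proof -
  assume "f \<in> Wsp"
  hence "finite {n. f n \<noteq> 0}" by (simp add: Wsp_def)
  hence "finite (Suc -` {n. f n \<noteq> 0})" by (rule finite_vimageI) simp
  moreover have "{n. Wu \<eta> \<alpha> \<kappa> f n \<noteq> 0} \<subseteq> Suc -` {n. f n \<noteq> 0}"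
    by (auto simp: Wu_def)
  ultimately show ?thesis by (simp add: Wsp_def finite_subset)
qed

lemma subspace_Wsp: "subspace_of (Wsp :: (nat \<Rightarrow> 'a::field) set)"
  unfolding subspace_of_def
proof (intro conjI ballI allI)
  show "(\<lambda>n. 0::'a) \<in> Wsp" by (simp add: Wsp_def)
next
  fix x y :: "nat \<Rightarrow> 'a" assume "x \<in> Wsp" "y \<in> Wsp"
  then have "finite ({n. x n \<noteq> 0} \<union> {n. y n \<noteq> 0})" by (simp add: Wsp_def)
  moreover have "{n. x n + y n \<noteq> 0} \<subseteq> {n. x n \<noteq> 0} \<union> {n. y n \<noteq> 0}" by auto
  ultimately show "(\<lambda>n. x n + y n) \<in> Wsp" by (simp add: Wsp_def finite_subset)
next
  fix c and x :: "nat \<Rightarrow> 'a" assume "x \<in> Wsp"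
  then have "finite {n. x n \<noteq> 0}" by (simp add: Wsp_def)
  moreover have "{n. c * x n \<noteq> 0} \<subseteq> {n. x n \<noteq> 0}" by auto
  ultimately show "(\<lambda>n. c * x n) \<in> Wsp" by (simp add: Wsp_def finite_subset)
qed

lemma module_W:
  fixes \<eta> :: "'a::field"
  assumes "\<eta> \<noteq> 0"
  shows "downup_module (1 + \<eta>) (- \<eta>) 1 Wsp Wd (Wu \<eta> (1 + \<eta>) \<kappa>)"
proof -
  let ?k = "kseq \<eta> (1 + \<eta>) \<kappa>"
  have r1: "Wd (Wd (Wu \<eta> (1 + \<eta>) \<kappa> x)) n =
     (1 + \<eta>) * Wd (Wu \<eta> (1 + \<eta>) \<kappa> (Wd x)) n + - \<eta> * Wu \<eta> (1 + \<eta>) \<kappa> (Wd (Wd x)) n + 1 * Wd x n" for x n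
  proof (cases n)
    case 0 then show ?thesis by (simp add: Wd_def Wu_def)
  next
    case (Suc m)
    have e: "\<eta> * ?k (Suc m) = (1 + \<eta>) * ?k m - (if m = 0 then 0 else ?k (m-1)) + 1"
      by (rule kseq_step[OF assms])
    have R: "(1 + \<eta>) * Wd (Wu \<eta> (1 + \<eta>) \<kappa> (Wd x)) n + - \<eta> * Wu \<eta> (1 + \<eta>) \<kappa> (Wd (Wd x)) n + 1 * Wd x n
       = ((1 + \<eta>) * ?k m - \<eta> * ?k (Suc m) + 1) * x m"
      using Suc by (simp add: Wd_def Wu_def algebra_simps del: kseq.simps)
    have L: "Wd (Wd (Wu \<eta> (1 + \<eta>) \<kappa> x)) n = (if m = 0 then 0 else ?k (m-1)) * x m"
      using Suc by (cases m) (simp_all add: Wd_def Wu_def del: kseq.simps)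
    show ?thesis unfolding R L e by (simp add: algebra_simps)
  qed
  have r2: "Wd (Wu \<eta> (1 + \<eta>) \<kappa> (Wu \<eta> (1 + \<eta>) \<kappa> x)) n =
     (1 + \<eta>) * Wu \<eta> (1 + \<eta>) \<kappa> (Wd (Wu \<eta> (1 + \<eta>) \<kappa> x)) n + - \<eta> * Wu \<eta> (1 + \<eta>) \<kappa> (Wu \<eta> (1 + \<eta>) \<kappa> (Wd x)) n + 1 * Wu \<eta> (1 + \<eta>) \<kappa> x n" for x n
  proof -
    have e: "\<eta> * ?k (Suc n) = (1 + \<eta>) * ?k n - (if n = 0 then 0 else ?k (n-1)) + 1"
      by (rule kseq_step[OF assms])
    have R: "(1 + \<eta>) * Wu \<eta> (1 + \<eta>) \<kappa> (Wd (Wu \<eta> (1 + \<eta>) \<kappa> x)) n + - \<eta> * Wu \<eta> (1 + \<eta>) \<kappa> (Wu \<eta> (1 + \<eta>) \<kappa> (Wd x)) n + 1 * Wu \<eta> (1 + \<eta>) \<kappa> x n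
      = ?k n * ((1 + \<eta>) * ?k n - \<eta> * ?k (Suc n) + 1) * x (Suc n)"
      by (simp add: Wd_def Wu_def algebra_simps del: kseq.simps)
    have L: "Wd (Wu \<eta> (1 + \<eta>) \<kappa> (Wu \<eta> (1 + \<eta>) \<kappa> x)) n = ?k n * (if n = 0 then 0 else ?k (n-1)) * x (Suc n)"
      by (cases n) (simp_all add: Wd_def Wu_def del: kseq.simps)
    show ?thesis unfolding R L e by (simp add: algebra_simps)
  qed
  show ?thesis
    unfolding downup_module_def
    using subspace_Wsp Wsp_Wd Wsp_Wu r1 r2
    by (auto simp: lin_on_def Wd_def Wu_def algebra_simps)
qed

lemma Wu_pow:
  "((Wu \<eta> \<alpha> \<kappa>) ^^ N) x n = (\<Prod>i<N. kseq \<eta> \<alpha> \<kappa> (n+i)) * x (n+N)"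
proof (induction N arbitrary: n)
  case 0 then show ?case by simp
next
  case (Suc N)
  have "((Wu \<eta> \<alpha> \<kappa>) ^^ Suc N) x n = kseq \<eta> \<alpha> \<kappa> n * ((Wu \<eta> \<alpha> \<kappa>) ^^ N) x (Suc n)"
    by (simp add: Wu_def)
  also have "\<dots> = kseq \<eta> \<alpha> \<kappa> n * ((\<Prod>i<N. kseq \<eta> \<alpha> \<kappa> (Suc n+i)) * x (Suc n+N))"
    by (simp add: Suc.IH)
  also have "\<dots> = (\<Prod>i<Suc N. kseq \<eta> \<alpha> \<kappa> (n+i)) * x (n + Suc N)"
  proof -
    have "(\<Prod>i<Suc N. kseq \<eta> \<alpha> \<kappa> (n+i)) = kseq \<eta> \<alpha> \<kappa> n * (\<Prod>i<N. kseq \<eta> \<alpha> \<kappa> (Suc n+i))"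
      by (subst prod.lessThan_Suc_shift) simp
    then show ?thesis by simp
  qed
  finally show ?case .
qed

lemma Wd_pow:
  "(Wd ^^ k) (\<lambda>n. if n = 0 then 1 else 0) = (\<lambda>n. if n = k then (1::'a::field) else 0)"
proof (induction k)
  case 0 then show ?case by simp
next
  case (Suc k)
  have "(Wd ^^ Suc k) (\<lambda>n. if n = 0 then 1 else 0) = Wd ((Wd ^^ k) (\<lambda>n. if n = 0 then (1::'a) else 0))"
    by simp
  also have "\<dots> = (\<lambda>n. if n = Suc k then 1 else 0)" unfolding Suc.IH
    by (rule ext) (auto simp: Wd_def)
  finally show ?case .
qed

lemma closed_pow:
  assumes "\<forall>x\<in>S. T x \<in> S" "x \<in> S"
  shows "(T ^^ N) x \<in> S"
  using assms by (induction N) auto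

lemma simple_W:
  fixes \<eta> :: "'a::field"
  assumes nz: "\<forall>n. kseq \<eta> \<alpha> \<kappa> n \<noteq> 0"
  shows "simple_module Wsp Wd (Wu \<eta> \<alpha> \<kappa>)"
  unfolding simple_module_def
proof (intro conjI allI impI)
  let ?e0 = "(\<lambda>n. if n = 0 then 1 else 0) :: nat \<Rightarrow> 'a"
  have e0W: "?e0 \<in> Wsp" by (simp add: Wsp_def)
  have "?e0 \<noteq> (\<lambda>n. 0)" by (auto dest: fun_cong[where x=0])
  then show "Wsp \<noteq> {\<lambda>n. 0::'a}" using e0W by blast
  fix S assume H: "S \<subseteq> Wsp \<and> subspace_of S \<and> (\<forall>x\<in>S. Wd x \<in> S \<and> Wu \<eta> \<alpha> \<kappa> x \<in> S)"
  then have SW: "S \<subseteq> Wsp" and sub: "subspace_of S" and cl: "\<forall>x\<in>S. Wd x \<in> S" "\<forall>x\<in>S. Wu \<eta> \<alpha> \<kappa> x \<in> S"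
    by auto
  show "S = {\<lambda>n. 0} \<or> S = Wsp"
  proof (cases "S \<subseteq> {\<lambda>n. 0}")
    case True
    have "(\<lambda>n. 0) \<in> S" using sub by (simp add: subspace_of_def)
    then show ?thesis using True by blast
  next
    case False
    then obtain x where xS: "x \<in> S" and xnz: "x \<noteq> (\<lambda>n. 0)" by blast
    have fin: "finite {n. x n \<noteq> 0}" using xS SW by (auto simp: Wsp_def)
    have ne: "{n. x n \<noteq> 0} \<noteq> {}" using xnz by auto
    define N where "N = Max {n. x n \<noteq> 0}"
    have xN: "x N \<noteq> 0" using Max_in[OF fin ne] by (simp add: N_def)
    have big: "x m = 0" if "m > N" for m
      using Max_ge[OF fin, of m] that by (fastforce simp: N_def)
    define c where "c = (\<Prod>i<N. kseq \<eta> \<alpha> \<kappa> i) * x N"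
    have cnz: "c \<noteq> 0" using nz xN by (simp add: c_def)
    have yS: "((Wu \<eta> \<alpha> \<kappa>) ^^ N) x \<in> S" by (rule closed_pow[OF cl(2) xS])
    have yeq: "((Wu \<eta> \<alpha> \<kappa>) ^^ N) x = (\<lambda>n. c * ?e0 n)"
    proof
      fix n show "((Wu \<eta> \<alpha> \<kappa>) ^^ N) x n = c * ?e0 n"
        by (cases n) (auto simp: Wu_pow c_def big)
    qed
    have "(\<lambda>n. inverse c * (c * ?e0 n)) \<in> S"
      using sub yS yeq by (auto simp: subspace_of_def)
    moreover have "(\<lambda>n. inverse c * (c * ?e0 n)) = ?e0" using cnz by auto
    ultimately have e0S: "?e0 \<in> S" by simp
    have ekS: "(\<lambda>n. if n = k then 1 else 0) \<in> S" for k
      using closed_pow[OF cl(1) e0S, of k] by (simp add: Wd_pow)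
    have fS: "(\<lambda>n. if n \<in> F then f n else 0) \<in> S" if "finite F" for F and f :: "nat \<Rightarrow> 'a"
      using that
    proof (induction F rule: finite_induct)
      case empty then show ?case using sub by (simp add: subspace_of_def)
    next
      case (insert k F)
      have a: "(\<lambda>n. f k * (if n = k then 1 else 0)) \<in> S" using sub ekS by (simp add: subspace_of_def)
      have "(\<lambda>n. (if n \<in> F then f n else 0) + f k * (if n = k then 1 else 0)) \<in> S"
        using sub insert.IH a by (simp add: subspace_of_def)
      moreover have "(\<lambda>n. (if n \<in> F then f n else 0) + f k * (if n = k then 1 else 0))
          = (\<lambda>n. if n \<in> insert k F then f n else 0)" using insert.hyps by auto
      ultimately show ?case by simp
    qed
    have "Wsp \<subseteq> S"
    proof
      fix f :: "nat \<Rightarrow> 'a" assume "f \<in> Wsp"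
      then have "finite {n. f n \<noteq> 0}" by (simp add: Wsp_def)
      moreover have "(\<lambda>n. if n \<in> {n. f n \<noteq> 0} then f n else 0) = f" by (rule ext) simp
      ultimately show "f \<in> S" using fS[of "{n. f n \<noteq> 0}" f] by simp
    qed
    then show ?thesis using SW by blast
  qed
qed

lemma noniso_W:
  fixes \<eta> :: "'a::field"
  assumes nz: "\<forall>n. kseq \<eta> \<alpha> \<kappa>' n \<noteq> 0" and ne: "\<kappa> \<noteq> \<kappa>'"
  shows "\<not> modules_iso Wsp Wd (Wu \<eta> \<alpha> \<kappa>) Wsp Wd (Wu \<eta> \<alpha> \<kappa>')"
proof
  assume "modules_iso Wsp Wd (Wu \<eta> \<alpha> \<kappa>) Wsp Wd (Wu \<eta> \<alpha> \<kappa>')"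
  then obtain \<phi> where bij: "bij_betw \<phi> Wsp Wsp" and lin: "lin_on Wsp \<phi>"
    and com: "\<forall>x\<in>Wsp. \<phi> (Wd x) = Wd (\<phi> x) \<and> \<phi> (Wu \<eta> \<alpha> \<kappa> x) = Wu \<eta> \<alpha> \<kappa>' (\<phi> x)"
    unfolding modules_iso_def by blast
  let ?e0 = "(\<lambda>n. if n = 0 then 1 else 0) :: nat \<Rightarrow> 'a"
  let ?z = "(\<lambda>n. 0) :: nat \<Rightarrow> 'a"
  have e0W: "?e0 \<in> Wsp" by (simp add: Wsp_def)
  have zW: "?z \<in> Wsp" by (simp add: Wsp_def)
  have lsc: "\<forall>c. \<forall>x\<in>Wsp. \<phi> (\<lambda>n. c * x n) = (\<lambda>n. c * \<phi> x n)" using lin unfolding lin_on_def by blast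
  have phi0: "\<phi> ?z = ?z"
  proof -
    have "\<phi> (\<lambda>n. 0 * ?e0 n) = (\<lambda>n. 0 * \<phi> ?e0 n)" using lsc[rule_format, OF e0W, of 0] .
    then show ?thesis by simp
  qed
  define g where "g = \<phi> ?e0"
  have "Wu \<eta> \<alpha> \<kappa> ?e0 = ?z" by (auto simp: Wu_def)
  then have "Wu \<eta> \<alpha> \<kappa>' g = ?z" using com e0W phi0 unfolding g_def by auto
  then have "Wu \<eta> \<alpha> \<kappa>' g n = 0" for n by simp
  then have gS: "g (Suc n) = 0" for n using nz[rule_format, of n] by (simp add: Wu_def) blast
  have "g \<noteq> ?z"
  proof
    assume "g = ?z"
    then have "\<phi> ?e0 = \<phi> ?z" using phi0 g_def by simp
    then have "?e0 = ?z" using bij e0W zW unfolding bij_betw_def inj_on_def by blast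
    then show False by (auto dest: fun_cong[where x=0])
  qed
  have g0: "g 0 \<noteq> 0"
  proof
    assume "g 0 = 0"
    then have "g = ?z" using gS by (auto intro!: ext simp: gr0_conv_Suc) (metis not0_implies_Suc)
    then show False using \<open>g \<noteq> ?z\<close> by simp
  qed
  have e1W: "Wd ?e0 \<in> Wsp" by (rule Wsp_Wd[OF e0W])
  have "Wu \<eta> \<alpha> \<kappa> (Wd ?e0) = (\<lambda>n. \<kappa> * ?e0 n)" by (auto simp: Wu_def Wd_def)
  moreover have "\<phi> (\<lambda>n. \<kappa> * ?e0 n) = (\<lambda>n. \<kappa> * g n)"
    using lsc[rule_format, OF e0W, of \<kappa>] unfolding g_def .
  ultimately have "\<phi> (Wu \<eta> \<alpha> \<kappa> (Wd ?e0)) = (\<lambda>n. \<kappa> * g n)" by simp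
  moreover have "\<phi> (Wu \<eta> \<alpha> \<kappa> (Wd ?e0)) = Wu \<eta> \<alpha> \<kappa>' (Wd g)"
    using com e0W e1W unfolding g_def by simp
  ultimately have "Wu \<eta> \<alpha> \<kappa>' (Wd g) = (\<lambda>n. \<kappa> * g n)" by simp
  then have "Wu \<eta> \<alpha> \<kappa>' (Wd g) 0 = \<kappa> * g 0" by simp
  then have "\<kappa>' * g 0 = \<kappa> * g 0" by (simp add: Wu_def Wd_def)
  then show False using g0 ne by simp
qed

definition Fexp :: "'a::field \<Rightarrow> 'a \<Rightarrow> nat \<Rightarrow> 'a" where
  "Fexp \<eta> q n = (1 - (1 - (of_nat n + 1) * q) * \<eta>^(n+1)) / (q * \<eta>^(n+1) * (\<eta> - 1))"

lemma Fexp_step: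
  fixes \<eta> :: "'a::field"
  assumes "\<eta> \<noteq> 0" "\<eta> \<noteq> 1" "q \<noteq> 0"
  shows "inverse \<eta> * ((1 + \<eta>) * Fexp \<eta> q (Suc n) - Fexp \<eta> q n + 1) = Fexp \<eta> q (Suc (Suc n))"
proof -
  define e where "e = \<eta>^(n+1)"
  define m where "m = (of_nat n :: 'a)"
  have e0: "e \<noteq> 0" using assms by (simp add: e_def)
  have d: "\<eta> - 1 \<noteq> 0" using assms by simp
  have A: "Fexp \<eta> q n = (1 - (1 - (m + 1) * q) * e) / (q * e * (\<eta> - 1))"
    by (simp add: Fexp_def e_def m_def)
  have B: "Fexp \<eta> q (Suc n) = (1 - (1 - (m + 2) * q) * (\<eta> * e)) / (q * (\<eta> * e) * (\<eta> - 1))"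
    by (simp add: Fexp_def e_def m_def algebra_simps)
  have C: "Fexp \<eta> q (Suc (Suc n)) = (1 - (1 - (m + 3) * q) * (\<eta> * \<eta> * e)) / (q * (\<eta> * \<eta> * e) * (\<eta> - 1))"
    by (simp add: Fexp_def e_def m_def algebra_simps)
  define D where "D = q * e * (\<eta> - 1)"
  have D0: "D \<noteq> 0" using e0 d assms by (simp add: D_def)
  define X0 where "X0 = 1 - (1 - (m + 1) * q) * e"
  define X1 where "X1 = 1 - (1 - (m + 2) * q) * (\<eta> * e)"
  define X2 where "X2 = 1 - (1 - (m + 3) * q) * (\<eta> * \<eta> * e)"
  have P: "(1+\<eta>)*X1 - \<eta>*X0 + \<eta>*D = X2"
    unfolding X0_def X1_def X2_def D_def by (simp add: algebra_simps)
  have A': "Fexp \<eta> q n = X0 / D" unfolding A X0_def D_def ..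
  have B': "Fexp \<eta> q (Suc n) = X1 / (\<eta> * D)" unfolding B X1_def D_def by (simp add: ac_simps)
  have C': "Fexp \<eta> q (Suc (Suc n)) = X2 / (\<eta> * \<eta> * D)" unfolding C X2_def D_def by (simp add: ac_simps)
  have "inverse \<eta> * ((1 + \<eta>) * (X1 / (\<eta> * D)) - X0 / D + 1) = ((1+\<eta>)*X1 - \<eta>*X0 + \<eta>*D) / (\<eta> * \<eta> * D)"
    using assms D0 by (simp add: field_simps)
  then show ?thesis unfolding A' B' C' P .
qed

lemma kseq_explicit:
  fixes \<eta> :: "'a::field"
  assumes "\<eta> \<noteq> 0" "\<eta> \<noteq> 1" "q \<noteq> 0"
  shows "kseq \<eta> (1 + \<eta>) (1 / (\<eta> - 1) - 1 / (q * \<eta>)) n = Fexp \<eta> q n"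
proof -
  let ?k = "kseq \<eta> (1 + \<eta>) (1 / (\<eta> - 1) - 1 / (q * \<eta>))"
  have d: "\<eta> - 1 \<noteq> 0" using assms by simp
  have "?k n = Fexp \<eta> q n \<and> ?k (Suc n) = Fexp \<eta> q (Suc n)"
  proof (induction n)
    case 0
    have a: "?k 0 = Fexp \<eta> q 0" using assms d by (simp add: Fexp_def field_simps)
    have b: "?k (Suc 0) = Fexp \<eta> q (Suc 0)" using assms d
      by (simp add: Fexp_def field_simps)
    show ?case using a b by simp
  next
    case (Suc n)
    have "?k (Suc (Suc n)) = inverse \<eta> * ((1 + \<eta>) * ?k (Suc n) - ?k n + 1)" by simp
    also have "\<dots> = Fexp \<eta> q (Suc (Suc n))" using Suc.IH Fexp_step[OF assms] by simp
    finally show ?case using Suc.IH by simp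
  qed
  then show ?thesis by simp
qed

lemma cop_int: "coprime (N::int) (1 + N * k)"
proof (rule coprimeI)
  fix c assume "c dvd N" "c dvd 1 + N * k"
  then have "c dvd N * k" by simp
  with \<open>c dvd 1 + N * k\<close> have "c dvd 1" by (simp add: dvd_add_left_iff)
  then show "is_unit c" by simp
qed

lemma Fexp_nz:
  fixes \<eta> :: "'a::field"
  assumes "\<eta> \<noteq> 0" "\<eta> \<noteq> 1" "q \<noteq> 0" "(1 - of_nat (Suc n) * q) * \<eta>^(Suc n) \<noteq> 1"
  shows "Fexp \<eta> q n \<noteq> 0"
proof -
  have "q * \<eta>^(n+1) * (\<eta> - 1) \<noteq> 0" using assms by simp
  moreover have "1 - (1 - (of_nat n + 1) * q) * \<eta>^(n+1) \<noteq> 0" using assms(4) by (simp add: add.commute)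
  ultimately show ?thesis by (simp add: Fexp_def)
qed

lemma key_contra:
  fixes \<eta> :: "'a::field_char_0"
  assumes ru: "\<forall>n::nat. n > 0 \<longrightarrow> \<eta> ^ n \<noteq> 1"
    and hN: "of_int N * \<eta>^m0 = 1" and m0: "m0 \<ge> 1"
    and hM: "of_int M * \<eta>^m = 1" and m: "m \<ge> 1" and cop: "coprime N M"
  shows False
proof -
  have "(of_int N * \<eta>^m0)^m = 1" using hN by simp
  then have a: "of_int (N^m) * \<eta>^(m0*m) = 1" by (simp add: power_mult_distrib power_mult)
  have "(of_int M * \<eta>^m)^m0 = 1" using hM by simp
  then have b: "of_int (M^m0) * \<eta>^(m0*m) = 1" by (simp add: power_mult_distrib power_mult mult.commute)
  have "\<eta>^(m0*m) \<noteq> 0" using a by (metis mult_zero_right zero_neq_one)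
  then have "(of_int (N^m) :: 'a) = of_int (M^m0)" using a b
    by (metis mult_right_cancel)
  then have eq: "N^m = M^m0" by (simp only: of_int_eq_iff)
  have "coprime (N^m) (M^m0)" using cop by simp
  then have "coprime (N^m) (N^m)" by (simp only: eq)
  then have "is_unit (N^m)" by simp
  then have "is_unit N" using m by (subst (asm) is_unit_power_iff) auto
  then have "N = 1 \<or> N = -1" by auto
  then show False
  proof
    assume "N = 1" then have "\<eta>^m0 = 1" using hN by simp
    then show False using ru m0 by auto
  next
    assume "N = -1" then have "\<eta>^m0 = -1" using hN by (simp add: minus_equation_iff)
    then have "\<eta>^(m0*2) = 1" by (simp add: power_mult)
    then show False using ru m0 by auto
  qed
qed

definition goodr :: "'a::field_char_0 \<Rightarrow> int \<Rightarrow> bool" where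
  "goodr \<eta> r \<longleftrightarrow> (\<forall>m::nat. m \<ge> 1 \<longrightarrow> (1 - of_nat m * of_int r) * \<eta>^m \<noteq> 1)"

lemma final:
  fixes \<eta> :: "'a::field_char_0"
  assumes e0: "\<eta> \<noteq> 0" and e1: "\<eta> \<noteq> 1" and inf: "infinite R"
    and R: "\<forall>r\<in>R. r \<noteq> 0 \<and> goodr \<eta> r"
  shows "\<exists>S :: 'a set. infinite S \<and>
    (\<forall>\<kappa>\<in>S. downup_module (1 + \<eta>) (- \<eta>) 1 Wsp Wd (Wu \<eta> (1 + \<eta>) \<kappa>) \<and>
              simple_module Wsp Wd (Wu \<eta> (1 + \<eta>) \<kappa>)) \<and>
    (\<forall>\<kappa>\<in>S. \<forall>\<kappa>'\<in>S. \<kappa> \<noteq> \<kappa>' \<longrightarrow>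
       \<not> modules_iso Wsp Wd (Wu \<eta> (1 + \<eta>) \<kappa>) Wsp Wd (Wu \<eta> (1 + \<eta>) \<kappa>'))"
proof -
  define kap where "kap r = 1 / (\<eta> - 1) - 1 / (of_int r * \<eta>)" for r :: int
  have nz: "\<forall>n. kseq \<eta> (1 + \<eta>) (kap r) n \<noteq> 0" if "r \<in> R" for r
  proof
    fix n
    have r0: "(of_int r :: 'a) \<noteq> 0" using R that by simp
    have g: "(1 - of_nat (Suc n) * of_int r) * \<eta>^(Suc n) \<noteq> (1::'a)"
    proof -
      have "goodr \<eta> r" using R that by blast
      then show ?thesis unfolding goodr_def by (erule_tac x="Suc n" in allE) simp
    qed
    show "kseq \<eta> (1 + \<eta>) (kap r) n \<noteq> 0"
      unfolding kap_def kseq_explicit[OF e0 e1 r0] by (rule Fexp_nz[OF e0 e1 r0 g])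
  qed
  have inj: "inj_on kap R"
  proof (rule inj_onI)
    fix r s assume "r \<in> R" "s \<in> R" "kap r = kap s"
    then have "1 / (of_int r * \<eta>) = (1 / (of_int s * \<eta>) :: 'a)" by (simp add: kap_def)
    then have "(of_int r :: 'a) = of_int s" using e0 by (simp add: field_simps)
    then show "r = s" by simp
  qed
  show ?thesis
  proof (intro exI conjI ballI impI)
    show "infinite (kap ` R)" using inf inj by (simp add: finite_image_iff)
  next
    fix \<kappa> assume "\<kappa> \<in> kap ` R"
    then obtain r where "r \<in> R" "\<kappa> = kap r" by blast
    show "downup_module (1 + \<eta>) (- \<eta>) 1 Wsp Wd (Wu \<eta> (1 + \<eta>) \<kappa>)" by (rule module_W[OF e0])
    show "simple_module Wsp Wd (Wu \<eta> (1 + \<eta>) \<kappa>)"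
      using simple_W nz \<open>r \<in> R\<close> \<open>\<kappa> = kap r\<close> by blast
  next
    fix \<kappa> \<kappa>' assume "\<kappa> \<in> kap ` R" "\<kappa>' \<in> kap ` R" "\<kappa> \<noteq> \<kappa>'"
    then obtain r where "r \<in> R" "\<kappa>' = kap r" by blast
    then show "\<not> modules_iso Wsp Wd (Wu \<eta> (1 + \<eta>) \<kappa>) Wsp Wd (Wu \<eta> (1 + \<eta>) \<kappa>')"
      using noniso_W nz \<open>\<kappa> \<noteq> \<kappa>'\<close> by blast
  qed
qed

theorem corollary4p6:
  fixes \<eta> :: "'a::field_char_0"
  assumes "\<eta> \<noteq> 0"
    and "\<forall>n::nat. n > 0 \<longrightarrow> \<eta> ^ n \<noteq> 1"
  shows "\<exists>S :: 'a set. infinite S \<and>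
    (\<forall>\<kappa>\<in>S. downup_module (1 + \<eta>) (- \<eta>) 1 Wsp Wd (Wu \<eta> (1 + \<eta>) \<kappa>) \<and>
              simple_module Wsp Wd (Wu \<eta> (1 + \<eta>) \<kappa>)) \<and>
    (\<forall>\<kappa>\<in>S. \<forall>\<kappa>'\<in>S. \<kappa> \<noteq> \<kappa>' \<longrightarrow>
       \<not> modules_iso Wsp Wd (Wu \<eta> (1 + \<eta>) \<kappa>) Wsp Wd (Wu \<eta> (1 + \<eta>) \<kappa>'))"
proof -
  have e1: "\<eta> \<noteq> 1" using assms(2) by (metis power_one_right zero_less_one)
  show ?thesis
  proof (cases "\<forall>r::int. r \<ge> 1 \<longrightarrow> goodr \<eta> r")
    case True
    have "infinite {r::int. r \<ge> 1}" using infinite_Ici[of "1::int"] by (simp add: atLeast_def)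
    moreover have "\<forall>r\<in>{r::int. r \<ge> 1}. r \<noteq> 0 \<and> goodr \<eta> r" using True by auto
    ultimately show ?thesis by (rule final[OF assms(1) e1])
  next
    case False
    then obtain r0 :: int and m0 :: nat where r0: "r0 \<ge> 1" and m0: "m0 \<ge> 1"
      and h0: "(1 - of_nat m0 * of_int r0) * \<eta>^m0 = 1" unfolding goodr_def by blast
    define N where "N = 1 - int m0 * r0"
    have hN: "of_int N * \<eta>^m0 = 1" using h0 by (simp add: N_def)
    have N0: "N \<noteq> 0" using hN by auto
    define R where "R = (\<lambda>j. N * j) ` {j::int. j \<ge> 1}"
    have "inj_on (\<lambda>j. N * j) {j::int. j \<ge> 1}" using N0 by (auto intro: inj_onI)
    then have "infinite R" unfolding R_def
      using infinite_Ici[of "1::int"] by (simp add: atLeast_def finite_image_iff)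
    moreover have "\<forall>r\<in>R. r \<noteq> 0 \<and> goodr \<eta> r"
    proof
      fix r assume "r \<in> R"
      then obtain j where j: "j \<ge> 1" "r = N * j" unfolding R_def by blast
      have "r \<noteq> 0" using j N0 by simp
      moreover have "goodr \<eta> r"
        unfolding goodr_def
      proof (intro allI impI)
        fix m :: nat assume m: "m \<ge> 1"
        show "(1 - of_nat m * of_int r) * \<eta>^m \<noteq> 1"
        proof
          assume hm: "(1 - of_nat m * of_int r) * \<eta>^m = 1"
          define M where "M = 1 + N * (- (int m * j))"
          have hM: "of_int M * \<eta>^m = 1" using hm j by (simp add: M_def algebra_simps)
          have "coprime N M" unfolding M_def by (rule cop_int)
          then show False using key_contra[OF assms(2) hN m0 hM m] by blast
        qed
      qed
      ultimately show "r \<noteq> 0 \<and> goodr \<eta> r" by simp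
    qed
    ultimately show ?thesis by (rule final[OF assms(1) e1])
  qed
qed

end
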